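(* Let $N:=\lceil 4(1-\gamma)^{-1}\rceil$, let $\Delta_0:=(1-\gamma)^{-1}\max_{s\in\mathcal S}g^{\pi_0}(s)$, and let $\bar D_0>0$ satisfy $\max_{s}D^{\pi^*}_{\pi_0}(s)\le\bar D_0$. Let PMD be run from $\pi_0$ with step sizes $\eta_t=4^{\lfloor t/N\rfloor}\bar D_0/\Delta_0$. Then for all $t\ge0$, $$V^{\pi_t}(s)-V^{\pi^*}(s)\le 2^{-\lfloor t/N\rfloor}\Delta_0\quad\forall s\in\mathcal S.$$
   Context: An infinite-horizon discounted MDP: finite state space $\mathcal S$, finite action space $\mathcal A$, transition probabilities $\mathcal P(s'\mid s,a)$, cost $c$, discount $\gamma\in[0,1)$. A policy $\pi$ assigns $\pi(\cdot\mid s)\in\Delta_{|\mathcal A|}$ (probability simplex). Let $\omega$ be a differentiable convex distance-generating function on $\Delta_{|\mathcal A|}$ and $D^{\pi'}_{\pi}(s):=\omega(\pi'(\cdot\mid s))-\omega(\pi(\cdot\mid s))-\langle\nabla\omega(\pi(\cdot\mid s)),\pi'(\cdot\mid s)-\pi(\cdot\mid s)\rangle$. For each $s$, $p\mapsto h^p(s)$ is closed convex on $\Delta_{|\mathcal A|}$ and $\mu_h$-strongly convex ($\mu_h\ge0$) w.r.t. this Bregman distance: $h^{p}(s)-h^{p'}(s)-\langle (h')^{p'}(s,\cdot),p-p'\rangle\ge\mu_h[\omega(p)-\omega(p')-\langle\nabla\omega(p'),p-p'\rangle]$. $V^\pi(s)=\mathbb E[\sum_{t\ge0}\gamma^t(c(s_t,a_t)+h^{\pi(\cdot\mid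 s_t)}(s_t))\mid s_0=s,\ a_t\sim\pi(\cdot\mid s_t),\ s_{t+1}\sim\mathcal P(\cdot\mid s_t,a_t)]$, $Q^\pi(s,a)$ the same with $a_0=a$. $\pi^*$ is an optimal policy ($V^{\pi^*}\le V^\pi$ pointwise for all $\pi$). Advantage: $\psi^\pi(s,p):=\langle Q^\pi(s,\cdot),p\rangle-V^\pi(s)+h^p(s)-h^{\pi(\cdot\mid s)}(s)$; advantage gap $g^\pi(s):=\max_{p\in\Delta_{|\mathcal A|}}\{-\psi^\pi(s,p)\}$. PMD: $\pi_{t+1}(\cdot\mid s)=\operatorname{argmin}_{p\in\Delta_{|\mathcal A|}}\{\eta_t[\langle Q^{\pi_t}(s,\cdot),p\rangle+h^p(s)]+\omega(p)-\omega(\pi_t(\cdot\mid s))-\langle\nabla\omega(\pi_t(\cdot\mid s)),p-\pi_t(\cdot\mid s)\rangle\}$ for all $s$. *)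

theory Defs
  imports "HOL-Analysis.Analysis"
begin

text \<open>P s a s' = transition probability, c s a = cost, h s p = regularizer h^p(s),
  gam = discount factor.\<close>

definition prob_simplex :: "(real^'a::finite) set" where
  "prob_simplex = {p. (\<forall>a. 0 \<le> p $ a) \<and> (\<Sum>a\<in>UNIV. p $ a) = 1}"

definition is_policy :: "('s \<Rightarrow> real^'a::finite) \<Rightarrow> bool" where
  "is_policy \<pi> \<longleftrightarrow> (\<forall>s. \<pi> s \<in> prob_simplex)"

text \<open>Bregman distance generated by omega with gradient map gw:
  bregman omega gw q p = omega q - omega p - <grad omega p, q - p>,
  so that D^{pi'}_{pi}(s) = bregman omega gw (pi' s) (pi s).\<close>
definition bregman :: "(real^'a::finite \<Rightarrow> real) \<Rightarrow> (real^'a \<Rightarrow> real^'a) \<Rightarrow> real^'a \<Rightarrow> real^'a \<Rightarrow> real" where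
  "bregman \<omega> g\<omega> q p = \<omega> q - \<omega> p - g\<omega> p \<bullet> (q - p)"

primrec state_dist :: "('s::finite \<Rightarrow> 'a::finite \<Rightarrow> 's \<Rightarrow> real) \<Rightarrow> ('s \<Rightarrow> real^'a)
    \<Rightarrow> ('s \<Rightarrow> real) \<Rightarrow> nat \<Rightarrow> 's \<Rightarrow> real" where
  "state_dist P \<pi> \<mu> 0 = \<mu>"
| "state_dist P \<pi> \<mu> (Suc t) =
     (\<lambda>s'. \<Sum>s\<in>UNIV. \<Sum>a\<in>UNIV. state_dist P \<pi> \<mu> t s * \<pi> s $ a * P s a s')"

definition step_cost :: "('s \<Rightarrow> 'a::finite \<Rightarrow> real) \<Rightarrow> ('s \<Rightarrow> real^'a \<Rightarrow> real)
    \<Rightarrow> ('s \<Rightarrow> real^'a) \<Rightarrow> 's \<Rightarrow> real" where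
  "step_cost c h \<pi> s = (\<Sum>a\<in>UNIV. \<pi> s $ a * c s a) + h s (\<pi> s)"

definition Vf :: "('s::finite \<Rightarrow> 'a::finite \<Rightarrow> 's \<Rightarrow> real) \<Rightarrow> ('s \<Rightarrow> 'a \<Rightarrow> real)
    \<Rightarrow> ('s \<Rightarrow> real^'a \<Rightarrow> real) \<Rightarrow> real \<Rightarrow> ('s \<Rightarrow> real^'a) \<Rightarrow> 's \<Rightarrow> real" where
  "Vf P c h \<gamma> \<pi> s =
     (\<Sum>t. \<gamma> ^ t * (\<Sum>s'\<in>UNIV. state_dist P \<pi> (\<lambda>x. if x = s then 1 else 0) t s' * step_cost c h \<pi> s'))"

text \<open>Q^pi(s,a): same expectation with a_0 = a.  At time 0 the cost is
  c(s,a) + h^{pi(.|s)}(s); the state s_1 is distributed as P(.|s,a), and from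
  time 1 on actions follow pi.\<close>
definition Qf :: "('s::finite \<Rightarrow> 'a::finite \<Rightarrow> 's \<Rightarrow> real) \<Rightarrow> ('s \<Rightarrow> 'a \<Rightarrow> real)
    \<Rightarrow> ('s \<Rightarrow> real^'a \<Rightarrow> real) \<Rightarrow> real \<Rightarrow> ('s \<Rightarrow> real^'a) \<Rightarrow> 's \<Rightarrow> 'a \<Rightarrow> real" where
  "Qf P c h \<gamma> \<pi> s a = c s a + h s (\<pi> s) +
     (\<Sum>t. \<gamma> ^ (Suc t) * (\<Sum>s'\<in>UNIV. state_dist P \<pi> (P s a) t s' * step_cost c h \<pi> s'))"

definition adv :: "('s::finite \<Rightarrow> 'a::finite \<Rightarrow> 's \<Rightarrow> real) \<Rightarrow> ('s \<Rightarrow> 'a \<Rightarrow> real)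
    \<Rightarrow> ('s \<Rightarrow> real^'a \<Rightarrow> real) \<Rightarrow> real \<Rightarrow> ('s \<Rightarrow> real^'a) \<Rightarrow> 's \<Rightarrow> real^'a \<Rightarrow> real" where
  "adv P c h \<gamma> \<pi> s p = (\<Sum>a\<in>UNIV. Qf P c h \<gamma> \<pi> s a * p $ a) - Vf P c h \<gamma> \<pi> s + h s p - h s (\<pi> s)"

definition adv_gap :: "('s::finite \<Rightarrow> 'a::finite \<Rightarrow> 's \<Rightarrow> real) \<Rightarrow> ('s \<Rightarrow> 'a \<Rightarrow> real)
    \<Rightarrow> ('s \<Rightarrow> real^'a \<Rightarrow> real) \<Rightarrow> real \<Rightarrow> ('s \<Rightarrow> real^'a) \<Rightarrow> 's \<Rightarrow> real" where
  "adv_gap P c h \<gamma> \<pi> s = (SUP p\<in>prob_simplex. - adv P c h \<gamma> \<pi> s p)"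

definition pmd_obj :: "('s::finite \<Rightarrow> 'a::finite \<Rightarrow> 's \<Rightarrow> real) \<Rightarrow> ('s \<Rightarrow> 'a \<Rightarrow> real)
    \<Rightarrow> ('s \<Rightarrow> real^'a \<Rightarrow> real) \<Rightarrow> real \<Rightarrow> (real^'a \<Rightarrow> real) \<Rightarrow> (real^'a \<Rightarrow> real^'a)
    \<Rightarrow> real \<Rightarrow> ('s \<Rightarrow> real^'a) \<Rightarrow> 's \<Rightarrow> real^'a \<Rightarrow> real" where
  "pmd_obj P c h \<gamma> \<omega> g\<omega> \<eta> \<pi> s p =
     \<eta> * ((\<Sum>a\<in>UNIV. Qf P c h \<gamma> \<pi> s a * p $ a) + h s p) + bregman \<omega> g\<omega> p (\<pi> s)"

end

theory Submission imports Defs begin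

lemma simplex_comb:
  assumes "x \<in> prob_simplex" "y \<in> prob_simplex" "0 \<le> l" "l \<le> 1"
  shows "x + l *\<^sub>R (y - x) \<in> prob_simplex"
proof -
  have "\<forall>a. 0 \<le> (x + l *\<^sub>R (y - x)) $ a"
  proof
    fix a
    have "0 \<le> x $ a" "0 \<le> y $ a" using assms by (auto simp: prob_simplex_def)
    then have "0 \<le> (1 - l) * x $ a + l * y $ a" using assms by auto
    then show "0 \<le> (x + l *\<^sub>R (y - x)) $ a" by (simp add: algebra_simps)
  qed
  moreover have "(\<Sum>a\<in>UNIV. (x + l *\<^sub>R (y - x)) $ a) = 1"
    using assms by (simp add: prob_simplex_def sum.distrib sum_subtractf sum_distrib_left[symmetric] algebra_simps)
  ultimately show ?thesis by (simp add: prob_simplex_def)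
qed

lemma convex_simplex: "convex (prob_simplex :: (real^'a::finite) set)"
proof (rule convexI)
  fix x y :: "real^'a" and u v :: real
  assume h: "x \<in> prob_simplex" "y \<in> prob_simplex" "0 \<le> u" "0 \<le> v" "u + v = 1"
  have "u *\<^sub>R x + v *\<^sub>R y = x + v *\<^sub>R (y - x)" using h(5) by (simp add: algebra_simps flip: scaleR_add_left)
  then show "u *\<^sub>R x + v *\<^sub>R y \<in> prob_simplex" using simplex_comb[OF h(1,2) h(4)] h by auto
qed

lemma dir_deriv:
  fixes \<omega> :: "real^'a::finite \<Rightarrow> real"
  assumes d: "(\<omega> has_derivative (\<lambda>v. g \<bullet> v)) (at x within prob_simplex)"
    and x: "x \<in> prob_simplex" and y: "y \<in> prob_simplex"
  shows "((\<lambda>l. (\<omega> (x + l *\<^sub>R (y - x)) - \<omega> x) / l) \<longlongrightarrow> g \<bullet> (y - x)) (at_right 0)"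
proof -
  let ?f = "\<lambda>l::real. x + l *\<^sub>R (y - x)"
  have f: "(?f has_derivative (\<lambda>l. l *\<^sub>R (y - x))) (at 0 within {0..1})"
    by (auto intro!: derivative_eq_intros)
  have sub: "?f ` {0..1} \<subseteq> prob_simplex" using simplex_comb[OF x y] by auto
  have d2: "(\<omega> has_derivative (\<lambda>v. g \<bullet> v)) (at (?f 0) within ?f ` {0..1})"
    using has_derivative_subset[OF _ sub] d by simp
  have "((\<omega> \<circ> ?f) has_derivative ((\<lambda>v. g \<bullet> v) \<circ> (\<lambda>l. l *\<^sub>R (y - x)))) (at 0 within {0..1})"
    by (rule diff_chain_within[OF f d2])
  moreover have "((\<lambda>v. g \<bullet> v) \<circ> (\<lambda>l. l *\<^sub>R (y - x))) = (*) (g \<bullet> (y - x))"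
    by (auto simp: fun_eq_iff)
  ultimately have "((\<omega> \<circ> ?f) has_field_derivative (g \<bullet> (y - x))) (at 0 within {0..1})"
    by (simp add: has_field_derivative_def)
  then have "((\<lambda>l. ((\<omega> \<circ> ?f) l - (\<omega> \<circ> ?f) 0) / (l - 0)) \<longlongrightarrow> g \<bullet> (y - x)) (at 0 within {0..1})"
    by (simp only: has_field_derivative_iff)
  then show ?thesis by (simp add: at_within_Icc_at_right)
qed

lemma dir_deriv_lb:
  fixes \<omega> :: "real^'a::finite \<Rightarrow> real"
  assumes d: "(\<omega> has_derivative (\<lambda>v. g \<bullet> v)) (at x within prob_simplex)"
    and x: "x \<in> prob_simplex" and y: "y \<in> prob_simplex"
    and K: "\<And>l. 0 < l \<Longrightarrow> l < 1 \<Longrightarrow> K \<le> (\<omega> (x + l *\<^sub>R (y - x)) - \<omega> x) / l"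
  shows "K \<le> g \<bullet> (y - x)"
proof (rule tendsto_le[OF _ dir_deriv[OF d x y] tendsto_const])
  show "at_right (0::real) \<noteq> bot" by simp
  show "\<forall>\<^sub>F l in at_right 0. K \<le> (\<omega> (x + l *\<^sub>R (y - x)) - \<omega> x) / l"
    by (rule eventually_at_rightI[of 0 1]) (auto intro: K)
qed

lemma dir_deriv_ub:
  fixes \<omega> :: "real^'a::finite \<Rightarrow> real"
  assumes d: "(\<omega> has_derivative (\<lambda>v. g \<bullet> v)) (at x within prob_simplex)"
    and x: "x \<in> prob_simplex" and y: "y \<in> prob_simplex"
    and K: "\<And>l. 0 < l \<Longrightarrow> l < 1 \<Longrightarrow> (\<omega> (x + l *\<^sub>R (y - x)) - \<omega> x) / l \<le> K"
  shows "g \<bullet> (y - x) \<le> K"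
proof (rule tendsto_le[OF _ tendsto_const dir_deriv[OF d x y]])
  show "at_right (0::real) \<noteq> bot" by simp
  show "\<forall>\<^sub>F l in at_right 0. (\<omega> (x + l *\<^sub>R (y - x)) - \<omega> x) / l \<le> K"
    by (rule eventually_at_rightI[of 0 1]) (auto intro: K)
qed

lemma convex_comb:
  assumes "convex_on prob_simplex f" "x \<in> prob_simplex" "y \<in> prob_simplex" "0 \<le> l" "l \<le> 1"
  shows "f (x + l *\<^sub>R (y - x)) \<le> f x + l * (f y - f x)"
proof -
  have "x + l *\<^sub>R (y - x) = (1 - l) *\<^sub>R x + l *\<^sub>R y" by (simp add: algebra_simps)
  moreover have "f ((1 - l) *\<^sub>R x + l *\<^sub>R y) \<le> (1 - l) * f x + l * f y"
    using convex_onD[OF assms(1) assms(4,5,2,3)] .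
  ultimately show ?thesis by (simp add: algebra_simps)
qed

lemma bregman_nonneg:
  fixes \<omega> :: "real^'a::finite \<Rightarrow> real"
  assumes conv: "convex_on prob_simplex \<omega>"
    and d: "\<And>p. p \<in> prob_simplex \<Longrightarrow> (\<omega> has_derivative (\<lambda>v. g\<omega> p \<bullet> v)) (at p within prob_simplex)"
    and x: "x \<in> prob_simplex" and y: "y \<in> prob_simplex"
  shows "0 \<le> bregman \<omega> g\<omega> y x"
proof -
  have "g\<omega> x \<bullet> (y - x) \<le> \<omega> y - \<omega> x"
  proof (rule dir_deriv_ub[OF d[OF x] x y])
    fix l :: real assume l: "0 < l" "l < 1"
    have "\<omega> (x + l *\<^sub>R (y - x)) - \<omega> x \<le> l * (\<omega> y - \<omega> x)"
      using convex_comb[OF conv x y, of l] l by simp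
    then show "(\<omega> (x + l *\<^sub>R (y - x)) - \<omega> x) / l \<le> \<omega> y - \<omega> x"
      using l by (simp add: divide_le_eq mult.commute)
  qed
  then show ?thesis by (simp add: bregman_def)
qed

lemma three_point:
  fixes \<omega> :: "real^'a::finite \<Rightarrow> real"
  assumes conv: "convex_on prob_simplex \<omega>"
    and d: "\<And>p. p \<in> prob_simplex \<Longrightarrow> (\<omega> has_derivative (\<lambda>v. g\<omega> p \<bullet> v)) (at p within prob_simplex)"
    and Lc: "convex_on prob_simplex L"
    and eta: "0 < \<eta>"
    and p0: "p0 \<in> prob_simplex" and p1: "p1 \<in> prob_simplex" and p: "p \<in> prob_simplex"
    and opt: "\<And>q. q \<in> prob_simplex \<Longrightarrow> \<eta> * L p1 + bregman \<omega> g\<omega> p1 p0 \<le> \<eta> * L q + bregman \<omega> g\<omega> q p0"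
  shows "\<eta> * L p1 + bregman \<omega> g\<omega> p1 p0 + bregman \<omega> g\<omega> p p1 \<le> \<eta> * L p + bregman \<omega> g\<omega> p p0"
proof -
  define K where "K = \<eta> * (L p - L p1) - g\<omega> p0 \<bullet> (p - p1)"
  have "- K \<le> g\<omega> p1 \<bullet> (p - p1)"
  proof (rule dir_deriv_lb[OF d[OF p1] p1 p])
    fix l :: real assume l: "0 < l" "l < 1"
    let ?q = "p1 + l *\<^sub>R (p - p1)"
    have q: "?q \<in> prob_simplex" using simplex_comb[OF p1 p] l by auto
    have o: "\<eta> * L p1 + bregman \<omega> g\<omega> p1 p0 \<le> \<eta> * L ?q + bregman \<omega> g\<omega> ?q p0" using opt[OF q] .
    have Lq: "L ?q \<le> L p1 + l * (L p - L p1)" using convex_comb[OF Lc p1 p] l by auto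
    have "?q - p0 = (p1 - p0) + l *\<^sub>R (p - p1)" by (simp add: algebra_simps)
    then have ie: "g\<omega> p0 \<bullet> (?q - p0) = g\<omega> p0 \<bullet> (p1 - p0) + l * (g\<omega> p0 \<bullet> (p - p1))"
      by (simp only: inner_add_right inner_scaleR_right)
    have "\<eta> * L ?q \<le> \<eta> * (L p1 + l * (L p - L p1))" using Lq eta by (intro mult_left_mono) auto
    then have "\<eta> * L ?q \<le> \<eta> * L p1 + l * (\<eta> * (L p - L p1))" by (simp add: algebra_simps)
    then have "- (l * K) \<le> \<omega> ?q - \<omega> p1"
      using o ie unfolding K_def bregman_def by (simp add: right_diff_distrib)
    then show "- K \<le> (\<omega> ?q - \<omega> p1) / l" using l by (simp add: le_divide_eq mult.commute)
  qed
  moreover have "p - p0 = (p1 - p0) + (p - p1)" by simp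
  then have "g\<omega> p0 \<bullet> (p - p0) = g\<omega> p0 \<bullet> (p1 - p0) + g\<omega> p0 \<bullet> (p - p1)"
    by (simp only: inner_add_right)
  ultimately show ?thesis unfolding K_def bregman_def
    by (simp add: inner_diff_left right_diff_distrib)
qed


definition Pt :: "('s::finite \<Rightarrow> 'a::finite \<Rightarrow> 's \<Rightarrow> real) \<Rightarrow> ('s \<Rightarrow> real^'a) \<Rightarrow> nat \<Rightarrow> ('s \<Rightarrow> real) \<Rightarrow> 's \<Rightarrow> real" where
  "Pt P \<pi> t f s = (\<Sum>s'\<in>UNIV. state_dist P \<pi> (\<lambda>x. if x = s then 1 else 0) t s' * f s')"

definition Pm :: "('s::finite \<Rightarrow> 'a::finite \<Rightarrow> 's \<Rightarrow> real) \<Rightarrow> ('s \<Rightarrow> real^'a) \<Rightarrow> ('s \<Rightarrow> real) \<Rightarrow> 's \<Rightarrow> real" where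
  "Pm P \<pi> f s = (\<Sum>a\<in>UNIV. \<pi> s $ a * (\<Sum>s1\<in>UNIV. P s a s1 * f s1))"

definition Rf :: "('s::finite \<Rightarrow> 'a::finite \<Rightarrow> 's \<Rightarrow> real) \<Rightarrow> ('s \<Rightarrow> real^'a) \<Rightarrow> real \<Rightarrow> ('s \<Rightarrow> real) \<Rightarrow> 's \<Rightarrow> real" where
  "Rf P \<pi> \<gamma> f s = (\<Sum>t. \<gamma> ^ t * Pt P \<pi> t f s)"

lemma pol_nonneg: "is_policy \<pi> \<Longrightarrow> 0 \<le> \<pi> s $ a"
  by (simp add: is_policy_def prob_simplex_def)

lemma pol_sum: "is_policy \<pi> \<Longrightarrow> (\<Sum>a\<in>UNIV. \<pi> s $ a) = 1"
  by (simp add: is_policy_def prob_simplex_def)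

lemma swap3: "(\<Sum>x\<in>A. \<Sum>y\<in>B. \<Sum>z\<in>C. f x y z) = (\<Sum>y\<in>B. \<Sum>z\<in>C. \<Sum>x\<in>A. f x y z)"
proof -
  have "(\<Sum>x\<in>A. \<Sum>y\<in>B. \<Sum>z\<in>C. f x y z) = (\<Sum>y\<in>B. \<Sum>x\<in>A. \<Sum>z\<in>C. f x y z)" by (rule sum.swap)
  also have "\<dots> = (\<Sum>y\<in>B. \<Sum>z\<in>C. \<Sum>x\<in>A. f x y z)" by (rule sum.cong[OF refl]) (rule sum.swap)
  finally show ?thesis .
qed

lemma swap2in: "(\<Sum>x\<in>A. \<Sum>y\<in>B. \<Sum>z\<in>C. f x y z) = (\<Sum>x\<in>A. \<Sum>z\<in>C. \<Sum>y\<in>B. f x y z)"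
  by (rule sum.cong[OF refl]) (rule sum.swap)

lemma ite_mult: "(if b then 1 else 0) * (x::real) = (if b then x else 0)"
  by simp

lemma mult_ite: "(x::real) * (if b then 1 else 0) = (if b then x else 0)"
  by simp

lemma sd_lin:
  "state_dist P \<pi> \<mu> t s' = (\<Sum>x\<in>UNIV. \<mu> x * state_dist P \<pi> (\<lambda>y. if y = x then 1 else 0) t s')"
proof (induction t arbitrary: s')
  case 0
  then show ?case by (simp add: mult_ite)
next
  case (Suc t)
  have "state_dist P \<pi> \<mu> (Suc t) s' =
     (\<Sum>s\<in>UNIV. \<Sum>a\<in>UNIV. (\<Sum>x\<in>UNIV. \<mu> x * state_dist P \<pi> (\<lambda>y. if y = x then 1 else 0) t s) * \<pi> s $ a * P s a s')"
    using Suc by simp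
  also have "\<dots> = (\<Sum>s\<in>UNIV. \<Sum>a\<in>UNIV. \<Sum>x\<in>UNIV. \<mu> x * (state_dist P \<pi> (\<lambda>y. if y = x then 1 else 0) t s * \<pi> s $ a * P s a s'))"
    by (simp add: sum_distrib_right mult.assoc)
  also have "\<dots> = (\<Sum>x\<in>UNIV. \<Sum>s\<in>UNIV. \<Sum>a\<in>UNIV. \<mu> x * (state_dist P \<pi> (\<lambda>y. if y = x then 1 else 0) t s * \<pi> s $ a * P s a s'))"
    by (rule swap3[symmetric])
  also have "\<dots> = (\<Sum>x\<in>UNIV. \<mu> x * (\<Sum>s\<in>UNIV. \<Sum>a\<in>UNIV. state_dist P \<pi> (\<lambda>y. if y = x then 1 else 0) t s * \<pi> s $ a * P s a s'))"
    by (simp add: sum_distrib_left)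
  finally show ?case by simp
qed

lemma sd_shift:
  "state_dist P \<pi> \<mu> (Suc t) = state_dist P \<pi> (\<lambda>s'. \<Sum>s\<in>UNIV. \<Sum>a\<in>UNIV. \<mu> s * \<pi> s $ a * P s a s') t"
  by (induction t) simp_all

lemma Pt_0: "Pt P \<pi> 0 f s = f s"
  by (simp add: Pt_def ite_mult)

lemma Pt_Suc: "Pt P \<pi> (Suc t) f s = Pt P \<pi> t (Pm P \<pi> f) s"
proof -
  let ?d = "state_dist P \<pi> (\<lambda>x. if x = s then 1 else 0) t"
  have "Pt P \<pi> (Suc t) f s = (\<Sum>s'\<in>UNIV. \<Sum>x\<in>UNIV. \<Sum>a\<in>UNIV. ?d x * (\<pi> x $ a * (P x a s' * f s')))"
    unfolding Pt_def by (simp add: sum_distrib_right mult.assoc)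
  also have "\<dots> = (\<Sum>x\<in>UNIV. \<Sum>a\<in>UNIV. \<Sum>s'\<in>UNIV. ?d x * (\<pi> x $ a * (P x a s' * f s')))"
    by (rule swap3)
  also have "\<dots> = Pt P \<pi> t (Pm P \<pi> f) s"
    unfolding Pt_def Pm_def by (simp add: sum_distrib_left)
  finally show ?thesis .
qed

lemma Pt_Suc': "Pt P \<pi> (Suc t) f s = Pm P \<pi> (Pt P \<pi> t f) s"
proof -
  let ?d = "\<lambda>x. state_dist P \<pi> (\<lambda>y. if y = x then 1 else 0) t"
  have e: "\<And>x. (\<Sum>sa\<in>UNIV. \<Sum>a\<in>UNIV. (if sa = s then 1 else 0) * \<pi> sa $ a * P sa a x)
     = (\<Sum>a\<in>UNIV. \<pi> s $ a * P s a x)"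
  proof -
    fix x
    have "(\<Sum>sa\<in>UNIV. \<Sum>a\<in>UNIV. (if sa = s then 1 else 0) * \<pi> sa $ a * P sa a x)
       = (\<Sum>sa\<in>UNIV. if sa = s then (\<Sum>a\<in>UNIV. \<pi> sa $ a * P sa a x) else 0)"
      by (intro sum.cong) auto
    then show "?thesis x" by simp
  qed
  have "Pt P \<pi> (Suc t) f s = (\<Sum>s'\<in>UNIV. (\<Sum>x\<in>UNIV. (\<Sum>a\<in>UNIV. \<pi> s $ a * P s a x) * ?d x s') * f s')"
    unfolding Pt_def sd_shift by (subst sd_lin) (simp only: e)
  also have "\<dots> = (\<Sum>s'\<in>UNIV. \<Sum>x\<in>UNIV. \<Sum>a\<in>UNIV. \<pi> s $ a * (P s a x * (?d x s' * f s')))"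
    by (simp add: sum_distrib_right mult.assoc)
  also have "\<dots> = (\<Sum>x\<in>UNIV. \<Sum>a\<in>UNIV. \<Sum>s'\<in>UNIV. \<pi> s $ a * (P s a x * (?d x s' * f s')))"
    by (rule swap3)
  also have "\<dots> = (\<Sum>a\<in>UNIV. \<Sum>x\<in>UNIV. \<Sum>s'\<in>UNIV. \<pi> s $ a * (P s a x * (?d x s' * f s')))"
    by (rule sum.swap)
  also have "\<dots> = Pm P \<pi> (Pt P \<pi> t f) s"
    unfolding Pt_def Pm_def by (simp add: sum_distrib_left)
  finally show ?thesis .
qed

lemma Pt_add: "Pt P \<pi> t (\<lambda>x. f x + g x) s = Pt P \<pi> t f s + Pt P \<pi> t g s"
  by (simp add: Pt_def distrib_left sum.distrib)

lemma Pt_diff: "Pt P \<pi> t (\<lambda>x. f x - g x) s = Pt P \<pi> t f s - Pt P \<pi> t g s"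
  by (simp add: Pt_def right_diff_distrib sum_subtractf)

lemma Pt_scale: "Pt P \<pi> t (\<lambda>x. c * f x) s = c * Pt P \<pi> t f s"
  by (simp add: Pt_def sum_distrib_left algebra_simps)

context
  fixes P :: "'s::finite \<Rightarrow> 'a::finite \<Rightarrow> 's \<Rightarrow> real"
  assumes P_nonneg: "\<And>s a s'. 0 \<le> P s a s'" and P_sum: "\<And>s a. (\<Sum>s'\<in>UNIV. P s a s') = 1"
begin

lemma sd_nonneg: "is_policy \<pi> \<Longrightarrow> (\<And>x. 0 \<le> \<mu> x) \<Longrightarrow> 0 \<le> state_dist P \<pi> \<mu> t s'"
proof -
  assume pol: "is_policy \<pi>" and m: "\<And>x. 0 \<le> \<mu> x"
  show ?thesis
    by (induction t arbitrary: s') (auto intro!: sum_nonneg mult_nonneg_nonneg P_nonneg m pol_nonneg[OF pol])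
qed

lemma sd_sum: "is_policy \<pi> \<Longrightarrow> (\<Sum>s'\<in>UNIV. state_dist P \<pi> \<mu> t s') = (\<Sum>x\<in>UNIV. \<mu> x)"
proof (induction t)
  case 0 then show ?case by simp
next
  case (Suc t)
  have "(\<Sum>s'\<in>UNIV. state_dist P \<pi> \<mu> (Suc t) s') =
      (\<Sum>s'\<in>UNIV. \<Sum>s\<in>UNIV. \<Sum>a\<in>UNIV. state_dist P \<pi> \<mu> t s * (\<pi> s $ a * P s a s'))"
    by (simp add: mult.assoc)
  also have "\<dots> = (\<Sum>s\<in>UNIV. \<Sum>a\<in>UNIV. \<Sum>s'\<in>UNIV. state_dist P \<pi> \<mu> t s * (\<pi> s $ a * P s a s'))"
    by (rule swap3)
  also have "\<dots> = (\<Sum>s\<in>UNIV. state_dist P \<pi> \<mu> t s * (\<Sum>a\<in>UNIV. \<pi> s $ a * (\<Sum>s'\<in>UNIV. P s a s')))"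
    by (simp add: sum_distrib_left)
  also have "\<dots> = (\<Sum>s\<in>UNIV. state_dist P \<pi> \<mu> t s)"
    using pol_sum[OF Suc.prems] by (simp add: P_sum)
  finally show ?case using Suc by simp
qed

lemma Pt_mono: "is_policy \<pi> \<Longrightarrow> (\<And>x. f x \<le> g x) \<Longrightarrow> Pt P \<pi> t f s \<le> Pt P \<pi> t g s"
  unfolding Pt_def by (intro sum_mono mult_left_mono sd_nonneg) auto

lemma Pt_const: "is_policy \<pi> \<Longrightarrow> Pt P \<pi> t (\<lambda>_. c) s = c"
  unfolding Pt_def by (simp add: sum_distrib_right[symmetric] sd_sum)

lemma Pt_bound: "is_policy \<pi> \<Longrightarrow> \<bar>Pt P \<pi> t f s\<bar> \<le> (\<Sum>x\<in>UNIV. \<bar>f x\<bar>)"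
proof -
  assume pol: "is_policy \<pi>"
  let ?B = "\<Sum>x\<in>UNIV. \<bar>f x\<bar>"
  have b: "\<And>y. \<bar>f y\<bar> \<le> ?B" by (rule member_le_sum) auto
  have b2: "\<And>y. f y \<le> ?B \<and> - ?B \<le> f y"
  proof -
    fix y
    have "f y \<le> ?B \<and> - f y \<le> ?B" using b[of y] by (simp only: abs_le_iff)
    then show "f y \<le> ?B \<and> - ?B \<le> f y" by linarith
  qed
  have "Pt P \<pi> t f s \<le> Pt P \<pi> t (\<lambda>_. ?B) s" using b2 by (intro Pt_mono pol) blast
  moreover have "Pt P \<pi> t (\<lambda>_. - ?B) s \<le> Pt P \<pi> t f s" using b2 by (intro Pt_mono pol) blast
  ultimately show ?thesis using Pt_const[OF pol] by (simp add: abs_le_iff)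
qed

context
  fixes \<gamma> :: real
  assumes g0: "0 \<le> \<gamma>" and g1: "\<gamma> < 1"
begin

lemma Rf_summable: "is_policy \<pi> \<Longrightarrow> summable (\<lambda>t. \<gamma> ^ t * Pt P \<pi> t f s)"
proof (rule summable_comparison_test)
  assume pol: "is_policy \<pi>"
  show "\<exists>N. \<forall>n\<ge>N. norm (\<gamma> ^ n * Pt P \<pi> n f s) \<le> \<gamma> ^ n * (\<Sum>x\<in>UNIV. \<bar>f x\<bar>)"
    using Pt_bound[OF pol] g0 by (auto simp: abs_mult intro!: mult_left_mono)
  show "summable (\<lambda>n. \<gamma> ^ n * (\<Sum>x\<in>UNIV. \<bar>f x\<bar>))"
    using g0 g1 by (intro summable_mult2 summable_geometric) auto
qed

lemma Rf_add: "is_policy \<pi> \<Longrightarrow> Rf P \<pi> \<gamma> (\<lambda>x. f x + g x) s = Rf P \<pi> \<gamma> f s + Rf P \<pi> \<gamma> g s"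
  unfolding Rf_def Pt_add distrib_left by (intro suminf_add[symmetric] Rf_summable)

lemma Rf_diff: "is_policy \<pi> \<Longrightarrow> Rf P \<pi> \<gamma> (\<lambda>x. f x - g x) s = Rf P \<pi> \<gamma> f s - Rf P \<pi> \<gamma> g s"
  unfolding Rf_def Pt_diff right_diff_distrib by (intro suminf_diff[symmetric] Rf_summable)

lemma Rf_scale: "is_policy \<pi> \<Longrightarrow> Rf P \<pi> \<gamma> (\<lambda>x. c * f x) s = c * Rf P \<pi> \<gamma> f s"
proof -
  assume pol: "is_policy \<pi>"
  have "Rf P \<pi> \<gamma> (\<lambda>x. c * f x) s = (\<Sum>t. c * (\<gamma> ^ t * Pt P \<pi> t f s))"
    unfolding Rf_def Pt_scale by (simp add: algebra_simps)
  also have "\<dots> = c * Rf P \<pi> \<gamma> f s" unfolding Rf_def by (intro suminf_mult Rf_summable pol)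
  finally show ?thesis .
qed

lemma Rf_mono: "is_policy \<pi> \<Longrightarrow> (\<And>x. f x \<le> g x) \<Longrightarrow> Rf P \<pi> \<gamma> f s \<le> Rf P \<pi> \<gamma> g s"
  unfolding Rf_def using g0 by (intro suminf_le Rf_summable mult_left_mono Pt_mono) auto

lemma Rf_const: "is_policy \<pi> \<Longrightarrow> Rf P \<pi> \<gamma> (\<lambda>_. c) s = c / (1 - \<gamma>)"
proof -
  assume pol: "is_policy \<pi>"
  have "Rf P \<pi> \<gamma> (\<lambda>_. c) s = (\<Sum>t. \<gamma> ^ t * c)" unfolding Rf_def Pt_const[OF pol] ..
  also have "\<dots> = (\<Sum>t. \<gamma> ^ t) * c" using g0 g1 by (intro suminf_mult2[symmetric] summable_geometric) auto
  also have "\<dots> = c / (1 - \<gamma>)" using g0 g1 by (subst suminf_geometric) auto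
  finally show ?thesis .
qed

lemma Rf_head: "is_policy \<pi> \<Longrightarrow> Rf P \<pi> \<gamma> f s = f s + (\<Sum>t. \<gamma> ^ Suc t * Pt P \<pi> (Suc t) f s)"
  unfolding Rf_def by (subst suminf_split_head[OF Rf_summable]) (auto simp: Pt_0)

lemma Rf_ge: "is_policy \<pi> \<Longrightarrow> (\<And>x. 0 \<le> f x) \<Longrightarrow> f s \<le> Rf P \<pi> \<gamma> f s"
proof -
  assume pol: "is_policy \<pi>" and f: "\<And>x. 0 \<le> f x"
  have "0 \<le> (\<Sum>t. \<gamma> ^ Suc t * Pt P \<pi> (Suc t) f s)"
    using Pt_mono[OF pol, of "\<lambda>_. 0" f] Pt_const[OF pol] f g0
    by (intro suminf_nonneg summable_ignore_initial_segment[of _ 1, simplified] Rf_summable pol) auto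
  then show ?thesis using Rf_head[OF pol] by simp
qed

lemma Rf_le: "is_policy \<pi> \<Longrightarrow> (\<And>x. f x \<le> 0) \<Longrightarrow> Rf P \<pi> \<gamma> f s \<le> f s"
proof -
  assume pol: "is_policy \<pi>" and f: "\<And>x. f x \<le> 0"
  have "- f s \<le> Rf P \<pi> \<gamma> (\<lambda>x. (-1) * f x) s" using Rf_ge[OF pol, of "\<lambda>x. (-1) * f x"] f by simp
  then show ?thesis using Rf_scale[OF pol, of "-1" f s] by simp
qed

lemma Rf_nonneg: "is_policy \<pi> \<Longrightarrow> (\<And>x. 0 \<le> f x) \<Longrightarrow> 0 \<le> Rf P \<pi> \<gamma> f s"
  using Rf_mono[of \<pi> "\<lambda>_. 0" f s] Rf_const[of \<pi> 0 s] by simp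

lemma Rf_tele: "is_policy \<pi> \<Longrightarrow> Rf P \<pi> \<gamma> (\<lambda>x. u x - \<gamma> * Pm P \<pi> u x) s = u s"
proof -
  assume pol: "is_policy \<pi>"
  have "Rf P \<pi> \<gamma> (\<lambda>x. u x - \<gamma> * Pm P \<pi> u x) s = Rf P \<pi> \<gamma> u s - \<gamma> * Rf P \<pi> \<gamma> (Pm P \<pi> u) s"
    using Rf_diff[OF pol] Rf_scale[OF pol] by simp
  also have "\<gamma> * Rf P \<pi> \<gamma> (Pm P \<pi> u) s = (\<Sum>t. \<gamma> ^ Suc t * Pt P \<pi> (Suc t) u s)"
    unfolding Rf_def Pt_Suc
    by (subst suminf_mult[symmetric], rule Rf_summable[OF pol]) (simp add: mult.assoc)
  finally show ?thesis using Rf_head[OF pol, of u s] by simp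
qed

lemma Rf_bellman: "is_policy \<pi> \<Longrightarrow> Rf P \<pi> \<gamma> f s = f s + \<gamma> * Pm P \<pi> (Rf P \<pi> \<gamma> f) s"
proof -
  assume pol: "is_policy \<pi>"
  have h1: "\<And>x. (\<lambda>t. \<gamma> ^ t * Pt P \<pi> t f x) sums Rf P \<pi> \<gamma> f x"
    unfolding Rf_def by (rule summable_sums[OF Rf_summable[OF pol]])
  have h2: "(\<lambda>t. \<Sum>a\<in>UNIV. \<pi> s $ a * (\<Sum>s1\<in>UNIV. P s a s1 * (\<gamma> ^ t * Pt P \<pi> t f s1)))
      sums Pm P \<pi> (Rf P \<pi> \<gamma> f) s"
    unfolding Pm_def by (intro sums_sum sums_mult h1)
  have h3: "(\<lambda>t. \<Sum>a\<in>UNIV. \<pi> s $ a * (\<Sum>s1\<in>UNIV. P s a s1 * (\<gamma> ^ t * Pt P \<pi> t f s1)))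
      = (\<lambda>t. \<gamma> ^ t * Pt P \<pi> (Suc t) f s)"
    unfolding Pt_Suc' Pm_def by (simp add: sum_distrib_left mult.left_commute)
  have h4: "(\<lambda>t. \<gamma> * (\<gamma> ^ t * Pt P \<pi> (Suc t) f s)) sums (\<gamma> * Pm P \<pi> (Rf P \<pi> \<gamma> f) s)"
    by (rule sums_mult) (use h2 h3 in simp)
  have "\<gamma> * Pm P \<pi> (Rf P \<pi> \<gamma> f) s = (\<Sum>t. \<gamma> ^ Suc t * Pt P \<pi> (Suc t) f s)"
    using sums_unique[OF h4] by (simp add: mult.assoc)
  then show ?thesis using Rf_head[OF pol] by simp
qed

end
end


lemma Vf_Rf: "Vf P c h \<gamma> \<pi> s = Rf P \<pi> \<gamma> (step_cost c h \<pi>) s"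
  by (simp add: Vf_def Rf_def Pt_def)

context
  fixes P :: "'s::finite \<Rightarrow> 'a::finite \<Rightarrow> 's \<Rightarrow> real" and \<gamma> :: real
  assumes P_nonneg: "\<And>s a s'. 0 \<le> P s a s'" and P_sum: "\<And>s a. (\<Sum>s'\<in>UNIV. P s a s') = 1"
    and g0: "0 \<le> \<gamma>" and g1: "\<gamma> < 1"
begin

lemma Qf_eq: "is_policy \<pi> \<Longrightarrow>
  Qf P c h \<gamma> \<pi> s a = c s a + h s (\<pi> s) + \<gamma> * (\<Sum>s1\<in>UNIV. P s a s1 * Vf P c h \<gamma> \<pi> s1)"
proof -
  assume pol: "is_policy \<pi>"
  let ?r = "step_cost c h \<pi>"
  have inner: "\<And>t. (\<Sum>s'\<in>UNIV. state_dist P \<pi> (P s a) t s' * ?r s') = (\<Sum>s1\<in>UNIV. P s a s1 * Pt P \<pi> t ?r s1)"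
  proof -
    fix t
    have "(\<Sum>s'\<in>UNIV. state_dist P \<pi> (P s a) t s' * ?r s')
       = (\<Sum>s'\<in>UNIV. (\<Sum>x\<in>UNIV. P s a x * state_dist P \<pi> (\<lambda>y. if y = x then 1 else 0) t s') * ?r s')"
      by (subst sd_lin) (rule refl)
    also have "\<dots> = (\<Sum>s'\<in>UNIV. \<Sum>x\<in>UNIV. P s a x * (state_dist P \<pi> (\<lambda>y. if y = x then 1 else 0) t s' * ?r s'))"
      by (simp add: sum_distrib_right mult.assoc)
    also have "\<dots> = (\<Sum>x\<in>UNIV. \<Sum>s'\<in>UNIV. P s a x * (state_dist P \<pi> (\<lambda>y. if y = x then 1 else 0) t s' * ?r s'))"
      by (rule sum.swap)
    also have "\<dots> = (\<Sum>s1\<in>UNIV. P s a s1 * Pt P \<pi> t ?r s1)"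
      unfolding Pt_def by (simp add: sum_distrib_left)
    finally show "?thesis t" .
  qed
  have "(\<Sum>t. \<gamma> ^ (Suc t) * (\<Sum>s'\<in>UNIV. state_dist P \<pi> (P s a) t s' * ?r s'))
      = (\<Sum>t. \<Sum>s1\<in>UNIV. \<gamma> * P s a s1 * (\<gamma> ^ t * Pt P \<pi> t ?r s1))"
    unfolding inner by (simp add: sum_distrib_left mult_ac)
  also have "\<dots> = (\<Sum>s1\<in>UNIV. \<Sum>t. \<gamma> * P s a s1 * (\<gamma> ^ t * Pt P \<pi> t ?r s1))"
    by (rule suminf_sum) (rule summable_mult, rule Rf_summable[OF P_nonneg P_sum g0 g1 pol])
  also have "\<dots> = (\<Sum>s1\<in>UNIV. \<gamma> * P s a s1 * Rf P \<pi> \<gamma> ?r s1)"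
    unfolding Rf_def by (simp add: suminf_mult Rf_summable[OF P_nonneg P_sum g0 g1] pol)
  finally show ?thesis unfolding Qf_def Vf_Rf by (simp add: sum_distrib_left algebra_simps)
qed

lemma adv_eq: "is_policy \<pi> \<Longrightarrow> (\<Sum>a\<in>UNIV. p $ a) = 1 \<Longrightarrow>
  adv P c h \<gamma> \<pi> s p = (\<Sum>a\<in>UNIV. p $ a * c s a) + h s p
     + \<gamma> * (\<Sum>a\<in>UNIV. p $ a * (\<Sum>s1\<in>UNIV. P s a s1 * Vf P c h \<gamma> \<pi> s1)) - Vf P c h \<gamma> \<pi> s"
proof -
  assume pol: "is_policy \<pi>" and p: "(\<Sum>a\<in>UNIV. p $ a) = 1"
  have "(\<Sum>a\<in>UNIV. Qf P c h \<gamma> \<pi> s a * p $ a) = (\<Sum>a\<in>UNIV. p $ a * c s a) + h s (\<pi> s) * (\<Sum>a\<in>UNIV. p $ a)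
     + \<gamma> * (\<Sum>a\<in>UNIV. p $ a * (\<Sum>s1\<in>UNIV. P s a s1 * Vf P c h \<gamma> \<pi> s1))"
    unfolding Qf_eq[OF pol] by (simp add: sum.distrib sum_distrib_left sum_distrib_right algebra_simps)
  then show ?thesis unfolding adv_def using p by simp
qed

lemma adv_pol: "is_policy \<pi> \<Longrightarrow> is_policy \<pi>' \<Longrightarrow>
  adv P c h \<gamma> \<pi> s (\<pi>' s) = step_cost c h \<pi>' s + \<gamma> * Pm P \<pi>' (Vf P c h \<gamma> \<pi>) s - Vf P c h \<gamma> \<pi> s"
  by (simp add: adv_eq pol_sum step_cost_def Pm_def mult.commute)

lemma adv_self: "is_policy \<pi> \<Longrightarrow> adv P c h \<gamma> \<pi> s (\<pi> s) = 0"
proof -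
  assume pol: "is_policy \<pi>"
  have "Vf P c h \<gamma> \<pi> s = step_cost c h \<pi> s + \<gamma> * Pm P \<pi> (Vf P c h \<gamma> \<pi>) s"
    unfolding Vf_Rf[abs_def] by (rule Rf_bellman[OF P_nonneg P_sum g0 g1 pol])
  then show ?thesis by (simp add: adv_pol[OF pol pol])
qed

lemma perf_diff: "is_policy \<pi> \<Longrightarrow> is_policy \<pi>' \<Longrightarrow>
  Vf P c h \<gamma> \<pi>' s - Vf P c h \<gamma> \<pi> s = Rf P \<pi>' \<gamma> (\<lambda>x. adv P c h \<gamma> \<pi> x (\<pi>' x)) s"
proof -
  assume pol: "is_policy \<pi>" and pol': "is_policy \<pi>'"
  let ?V = "Vf P c h \<gamma> \<pi>"
  have "Rf P \<pi>' \<gamma> (\<lambda>x. adv P c h \<gamma> \<pi> x (\<pi>' x)) s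
      = Rf P \<pi>' \<gamma> (\<lambda>x. step_cost c h \<pi>' x - (?V x - \<gamma> * Pm P \<pi>' ?V x)) s"
  proof -
    have "(\<lambda>x. adv P c h \<gamma> \<pi> x (\<pi>' x)) = (\<lambda>x. step_cost c h \<pi>' x - (?V x - \<gamma> * Pm P \<pi>' ?V x))"
      by (rule ext) (simp add: adv_pol[OF pol pol'])
    then show ?thesis by simp
  qed
  also have "\<dots> = Rf P \<pi>' \<gamma> (step_cost c h \<pi>') s - Rf P \<pi>' \<gamma> (\<lambda>x. ?V x - \<gamma> * Pm P \<pi>' ?V x) s"
    by (rule Rf_diff[OF P_nonneg P_sum g0 g1 pol'])
  also have "\<dots> = Vf P c h \<gamma> \<pi>' s - ?V s"
    by (simp only: Rf_tele[OF P_nonneg P_sum g0 g1 pol'] Vf_Rf[of P c h \<gamma> \<pi>' s, symmetric])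
  finally show ?thesis by simp
qed

end


theorem theorem3p4:
  fixes P :: "'s::finite \<Rightarrow> 'a::finite \<Rightarrow> 's \<Rightarrow> real"
    and c :: "'s \<Rightarrow> 'a \<Rightarrow> real"
    and h :: "'s \<Rightarrow> real^'a \<Rightarrow> real"
    and h' :: "'s \<Rightarrow> real^'a \<Rightarrow> 'a \<Rightarrow> real"
    and \<gamma> \<mu>h D0 :: real
    and \<omega> :: "real^'a \<Rightarrow> real"
    and g\<omega> :: "real^'a \<Rightarrow> real^'a"
    and \<pi>star \<pi>0 :: "'s \<Rightarrow> real^'a"
    and \<pi>s :: "nat \<Rightarrow> 's \<Rightarrow> real^'a"
  assumes P_nonneg: "\<And>s a s'. 0 \<le> P s a s'"
    and P_sum: "\<And>s a. (\<Sum>s'\<in>UNIV. P s a s') = 1"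
    and gamma: "0 \<le> \<gamma>" "\<gamma> < 1"
    and omega_convex: "convex_on prob_simplex \<omega>"
    and omega_diff: "\<And>p. p \<in> prob_simplex \<Longrightarrow>
           (\<omega> has_derivative (\<lambda>v. g\<omega> p \<bullet> v)) (at p within prob_simplex)"
    and h_convex: "\<And>s. convex_on prob_simplex (h s)"
    and h_closed: "\<And>s. closed {(p, r). p \<in> prob_simplex \<and> h s p \<le> r}"
    and muh: "0 \<le> \<mu>h"
    and h_strong: "\<And>s p p'. p \<in> prob_simplex \<Longrightarrow> p' \<in> prob_simplex \<Longrightarrow>
           h s p - h s p' - (\<Sum>a\<in>UNIV. h' s p' a * (p $ a - p' $ a))
             \<ge> \<mu>h * bregman \<omega> g\<omega> p p'"
    and opt_pol: "is_policy \<pi>star"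
    and opt: "\<And>\<pi> s. is_policy \<pi> \<Longrightarrow> Vf P c h \<gamma> \<pi>star s \<le> Vf P c h \<gamma> \<pi> s"
    and init_pol: "is_policy \<pi>0"
    and D0_pos: "0 < D0"
    and D0_bound: "\<And>s. bregman \<omega> g\<omega> (\<pi>star s) (\<pi>0 s) \<le> D0"
    and Delta0_pos: "0 < Max (range (adv_gap P c h \<gamma> \<pi>0)) / (1 - \<gamma>)"
    and pmd_init: "\<pi>s 0 = \<pi>0"
    and pmd_step: "\<And>t s. \<pi>s (Suc t) s \<in> prob_simplex \<and>
           (\<forall>p\<in>prob_simplex.
              pmd_obj P c h \<gamma> \<omega> g\<omega>
                 (4 ^ (t div nat \<lceil>4 / (1 - \<gamma>)\<rceil>) * D0
                    / (Max (range (adv_gap P c h \<gamma> \<pi>0)) / (1 - \<gamma>)))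
                 (\<pi>s t) s (\<pi>s (Suc t) s)
              \<le> pmd_obj P c h \<gamma> \<omega> g\<omega>
                 (4 ^ (t div nat \<lceil>4 / (1 - \<gamma>)\<rceil>) * D0
                    / (Max (range (adv_gap P c h \<gamma> \<pi>0)) / (1 - \<gamma>)))
                 (\<pi>s t) s p)"
  shows "\<forall>t s. Vf P c h \<gamma> (\<pi>s t) s - Vf P c h \<gamma> \<pi>star s
           \<le> (1 / 2) ^ (t div nat \<lceil>4 / (1 - \<gamma>)\<rceil>)
              * (Max (range (adv_gap P c h \<gamma> \<pi>0)) / (1 - \<gamma>))"
proof -
  have g1': "0 < 1 - \<gamma>" using gamma by simp
  define N where "N = nat \<lceil>4 / (1 - \<gamma>)\<rceil>"
  define G where "G = Max (range (adv_gap P c h \<gamma> \<pi>0))"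
  define \<Delta> where "\<Delta> = G / (1 - \<gamma>)"
  define \<eta> where "\<eta> = (\<lambda>t::nat. 4 ^ (t div N) * D0 / \<Delta>)"
  define V where "V = (\<lambda>t. Vf P c h \<gamma> (\<pi>s t))"
  define Vs where "Vs = Vf P c h \<gamma> \<pi>star"
  define a where "a = (\<lambda>t s. V t s - Vs s)"
  define D where "D = (\<lambda>t s. bregman \<omega> g\<omega> (\<pi>star s) (\<pi>s t s))"
  define R where "R = Rf P \<pi>star \<gamma>"
  define L where "L = (\<lambda>t s q. (\<Sum>a\<in>UNIV. Qf P c h \<gamma> (\<pi>s t) s a * q $ a) + h s q)"
  have Nge: "4 / (1 - \<gamma>) \<le> real N" unfolding N_def by (rule real_nat_ceiling_ge)
  have Npos: "0 < N" using Nge g1' by (cases N) auto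
  have \<Delta>pos: "0 < \<Delta>" using Delta0_pos unfolding \<Delta>_def G_def .
  have \<eta>pos: "\<And>t. 0 < \<eta> t" unfolding \<eta>_def using \<Delta>pos D0_pos by simp
  have pol: "\<And>t. is_policy (\<pi>s t)"
  proof -
    fix t show "is_policy (\<pi>s t)"
    proof (cases t)
      case 0 then show ?thesis using init_pol pmd_init by simp
    next
      case (Suc n)
      have "\<And>s. \<pi>s (Suc n) s \<in> prob_simplex" by (rule conjunct1[OF pmd_step])
      then show ?thesis unfolding Suc is_policy_def by blast
    qed
  qed
  have mem: "\<And>t s. \<pi>s t s \<in> prob_simplex" using pol by (simp add: is_policy_def)
  have smem: "\<And>s. \<pi>star s \<in> prob_simplex" using opt_pol by (simp add: is_policy_def)
  have bnn: "\<And>x y. x \<in> prob_simplex \<Longrightarrow> y \<in> prob_simplex \<Longrightarrow> 0 \<le> bregman \<omega> g\<omega> y x"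
    by (rule bregman_nonneg[OF omega_convex omega_diff])
  have a_nonneg: "\<And>t s. 0 \<le> a t s" unfolding a_def V_def Vs_def using opt[OF pol] by simp
  have D_nonneg: "\<And>t s. 0 \<le> D t s" unfolding D_def using bnn mem smem by simp
  have Lc: "\<And>t s. convex_on prob_simplex (L t s)"
  proof -
    fix t s
    have "convex_on prob_simplex (\<lambda>q. \<Sum>a\<in>UNIV. Qf P c h \<gamma> (\<pi>s t) s a * q $ a)"
      unfolding convex_on_def
      by (simp add: convex_simplex sum.distrib sum_distrib_left algebra_simps)
    then show "convex_on prob_simplex (L t s)" unfolding L_def
      by (intro convex_on_add h_convex)
  qed
  have pmd: "\<And>t s q. q \<in> prob_simplex \<Longrightarrow>
      \<eta> t * L t s (\<pi>s (Suc t) s) + bregman \<omega> g\<omega> (\<pi>s (Suc t) s) (\<pi>s t s)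
        \<le> \<eta> t * L t s q + bregman \<omega> g\<omega> q (\<pi>s t s)"
  proof -
    fix t s and q :: "real^'a" assume q: "q \<in> prob_simplex"
    show "\<eta> t * L t s (\<pi>s (Suc t) s) + bregman \<omega> g\<omega> (\<pi>s (Suc t) s) (\<pi>s t s)
        \<le> \<eta> t * L t s q + bregman \<omega> g\<omega> q (\<pi>s t s)"
      using conjunct2[OF pmd_step[of t s]] q unfolding \<eta>_def N_def \<Delta>_def G_def L_def pmd_obj_def
      by (rule bspec)
  qed
  have tp: "\<And>t s q. q \<in> prob_simplex \<Longrightarrow>
      \<eta> t * L t s (\<pi>s (Suc t) s) + bregman \<omega> g\<omega> (\<pi>s (Suc t) s) (\<pi>s t s)
        + bregman \<omega> g\<omega> q (\<pi>s (Suc t) s) \<le> \<eta> t * L t s q + bregman \<omega> g\<omega> q (\<pi>s t s)"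
    by (rule three_point[OF omega_convex omega_diff Lc \<eta>pos mem mem _ pmd])
  have advL: "\<And>t s q. adv P c h \<gamma> (\<pi>s t) s q = L t s q - V t s - h s (\<pi>s t s)"
    unfolding adv_def L_def V_def by simp
  have step_le: "\<And>t s. adv P c h \<gamma> (\<pi>s t) s (\<pi>s (Suc t) s) \<le> 0"
  proof -
    fix t s
    have "\<eta> t * L t s (\<pi>s (Suc t) s) + bregman \<omega> g\<omega> (\<pi>s (Suc t) s) (\<pi>s t s)
        + bregman \<omega> g\<omega> (\<pi>s t s) (\<pi>s (Suc t) s) \<le> \<eta> t * L t s (\<pi>s t s) + 0"
      using tp[where t=t and s=s and q="\<pi>s t s", OF mem] by (simp add: bregman_def)
    then have "\<eta> t * L t s (\<pi>s (Suc t) s) \<le> \<eta> t * L t s (\<pi>s t s)"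
      using bnn[OF mem[of t s] mem[of "Suc t" s]] bnn[OF mem[of "Suc t" s] mem[of t s]] by linarith
    then have l1: "L t s (\<pi>s (Suc t) s) \<le> L t s (\<pi>s t s)" using \<eta>pos[of t] by simp
    have "adv P c h \<gamma> (\<pi>s t) s (\<pi>s t s) = 0"
      by (rule adv_self[OF P_nonneg P_sum gamma pol])
    then have "L t s (\<pi>s t s) - V t s - h s (\<pi>s t s) = 0" by (simp only: advL)
    with l1 show "adv P c h \<gamma> (\<pi>s t) s (\<pi>s (Suc t) s) \<le> 0" unfolding advL by linarith
  qed
  have mono: "\<And>t s. V (Suc t) s - V t s \<le> adv P c h \<gamma> (\<pi>s t) s (\<pi>s (Suc t) s)"
  proof -
    fix t s
    have "V (Suc t) s - V t s = Rf P (\<pi>s (Suc t)) \<gamma> (\<lambda>x. adv P c h \<gamma> (\<pi>s t) x (\<pi>s (Suc t) x)) s"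
      unfolding V_def by (rule perf_diff[OF P_nonneg P_sum gamma pol pol])
    also have "\<dots> \<le> adv P c h \<gamma> (\<pi>s t) s (\<pi>s (Suc t) s)"
      by (rule Rf_le[OF P_nonneg P_sum gamma pol step_le])
    finally show "V (Suc t) s - V t s \<le> adv P c h \<gamma> (\<pi>s t) s (\<pi>s (Suc t) s)" .
  qed
  have a_mono: "\<And>t s. a (Suc t) s \<le> a t s"
    using mono step_le unfolding a_def by (smt (verit))
  have Rlin: "\<And>f g e s. R (\<lambda>x. e * (f x - g x) + D' x) s = e * (R f s - R g s) + R D' s" for D'
    unfolding R_def
    by (simp add: Rf_add[OF P_nonneg P_sum gamma opt_pol] Rf_scale[OF P_nonneg P_sum gamma opt_pol]
        Rf_diff[OF P_nonneg P_sum gamma opt_pol])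
  have Rlin2: "\<And>f e s. R (\<lambda>x. e * f x + D' x) s = e * R f s + R D' s" for D'
    unfolding R_def
    by (simp add: Rf_add[OF P_nonneg P_sum gamma opt_pol] Rf_scale[OF P_nonneg P_sum gamma opt_pol])
  have Rmono: "\<And>f g s. (\<And>x. f x \<le> g x) \<Longrightarrow> R f s \<le> R g s"
    unfolding R_def by (rule Rf_mono[OF P_nonneg P_sum gamma opt_pol])
  have Rconst: "\<And>e s. R (\<lambda>_. e) s = e / (1 - \<gamma>)"
    unfolding R_def by (rule Rf_const[OF P_nonneg P_sum gamma opt_pol])
  have Rnn: "\<And>f s. (\<And>x. 0 \<le> f x) \<Longrightarrow> 0 \<le> R f s"
    unfolding R_def by (rule Rf_nonneg[OF P_nonneg P_sum gamma opt_pol])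
  have pdstar: "\<And>t s. R (\<lambda>x. adv P c h \<gamma> (\<pi>s t) x (\<pi>star x)) s = - a t s"
  proof -
    fix t s
    have "Vf P c h \<gamma> \<pi>star s - Vf P c h \<gamma> (\<pi>s t) s = Rf P \<pi>star \<gamma> (\<lambda>x. adv P c h \<gamma> (\<pi>s t) x (\<pi>star x)) s"
      by (rule perf_diff[OF P_nonneg P_sum gamma pol opt_pol])
    then show "R (\<lambda>x. adv P c h \<gamma> (\<pi>s t) x (\<pi>star x)) s = - a t s"
      by (simp add: R_def a_def V_def Vs_def)
  qed
  have key: "\<And>t s. \<eta> t * (R (a (Suc t)) s - R (a t) s + a t s) + R (D (Suc t)) s \<le> R (D t) s"
  proof -
    fix t s
    have pw: "\<And>x. \<eta> t * (a (Suc t) x - a t x) + D (Suc t) x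
        \<le> \<eta> t * adv P c h \<gamma> (\<pi>s t) x (\<pi>star x) + D t x"
    proof -
      fix x
      have t1: "\<eta> t * L t x (\<pi>s (Suc t) x) + bregman \<omega> g\<omega> (\<pi>s (Suc t) x) (\<pi>s t x)
        + D (Suc t) x \<le> \<eta> t * L t x (\<pi>star x) + D t x"
        using tp[where t=t and s=x and q="\<pi>star x", OF smem] unfolding D_def .
      have t2: "\<eta> t * a (Suc t) x - \<eta> t * a t x
          \<le> \<eta> t * L t x (\<pi>s (Suc t) x) - \<eta> t * V t x - \<eta> t * h x (\<pi>s t x)"
      proof -
        have "a (Suc t) x - a t x \<le> L t x (\<pi>s (Suc t) x) - V t x - h x (\<pi>s t x)"
          using mono[of t x] unfolding a_def advL by simp
        then have "\<eta> t * (a (Suc t) x - a t x) \<le> \<eta> t * (L t x (\<pi>s (Suc t) x) - V t x - h x (\<pi>s t x))"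
          using \<eta>pos[of t] by (intro mult_left_mono) auto
        then show ?thesis by (simp add: right_diff_distrib)
      qed
      have b: "0 \<le> bregman \<omega> g\<omega> (\<pi>s (Suc t) x) (\<pi>s t x)" using bnn[OF mem[of t x] mem[of "Suc t" x]] .
      have "\<eta> t * a (Suc t) x - \<eta> t * a t x + D (Suc t) x
          \<le> \<eta> t * L t x (\<pi>star x) - \<eta> t * V t x - \<eta> t * h x (\<pi>s t x) + D t x"
        using t1 t2 b by linarith
      then show "\<eta> t * (a (Suc t) x - a t x) + D (Suc t) x
        \<le> \<eta> t * adv P c h \<gamma> (\<pi>s t) x (\<pi>star x) + D t x"
        unfolding advL by (simp add: right_diff_distrib)
    qed
    have "R (\<lambda>x. \<eta> t * (a (Suc t) x - a t x) + D (Suc t) x) s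
        \<le> R (\<lambda>x. \<eta> t * adv P c h \<gamma> (\<pi>s t) x (\<pi>star x) + D t x) s"
      by (rule Rmono) (rule pw)
    then have "\<eta> t * (R (a (Suc t)) s - R (a t) s) + R (D (Suc t)) s
        \<le> \<eta> t * R (\<lambda>x. adv P c h \<gamma> (\<pi>s t) x (\<pi>star x)) s + R (D t) s"
      by (simp only: Rlin Rlin2)
    then show "\<eta> t * (R (a (Suc t)) s - R (a t) s + a t s) + R (D (Suc t)) s \<le> R (D t) s"
      unfolding pdstar by (simp add: algebra_simps)
  qed
  have divk: "\<And>k j. j < N \<Longrightarrow> (k * N + j) div N = k"
  proof -
    fix k j assume "j < N"
    have "(j + k * N) div N = k + j div N" using Npos by (intro div_mult_self1) simp
    then show "(k * N + j) div N = k" using \<open>j < N\<close> by (simp add: add.commute)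
  qed
  have \<eta>k: "\<And>k j. j < N \<Longrightarrow> \<eta> (k * N + j) = 4 ^ k * D0 / \<Delta>" unfolding \<eta>_def using divk by simp
  have \<eta>k0: "\<And>k. \<eta> (k * N) = 4 ^ k * D0 / \<Delta>" using \<eta>k[OF Npos, of _] by simp
  define \<Phi> where "\<Phi> = (\<lambda>k s. R (a (k * N)) s + R (D (k * N)) s / \<eta> (k * N))"
  have epoch: "\<And>k j s. j \<le> N \<Longrightarrow>
      R (a (k * N + j)) s + real j * a (k * N + j) s + R (D (k * N + j)) s / \<eta> (k * N) \<le> \<Phi> k s"
  proof -
    fix k j s
    show "j \<le> N \<Longrightarrow> R (a (k * N + j)) s + real j * a (k * N + j) s + R (D (k * N + j)) s / \<eta> (k * N) \<le> \<Phi> k s"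
    proof (induction j)
      case 0
      then show ?case unfolding \<Phi>_def by simp
    next
      case (Suc j)
      let ?t = "k * N + j"
      have jN: "j < N" using Suc.prems by simp
      have IH: "R (a ?t) s + real j * a ?t s + R (D ?t) s / \<eta> (k * N) \<le> \<Phi> k s"
        using Suc.IH jN by simp
      have et: "\<eta> ?t = \<eta> (k * N)" using \<eta>k[OF jN] \<eta>k0 by simp
      have K: "\<eta> ?t * (R (a (Suc ?t)) s - R (a ?t) s + a ?t s) + R (D (Suc ?t)) s \<le> R (D ?t) s"
        by (rule key)
      have K2: "R (a (Suc ?t)) s - R (a ?t) s + a ?t s + R (D (Suc ?t)) s / \<eta> (k * N)
          \<le> R (D ?t) s / \<eta> (k * N)"
      proof -
        have "(\<eta> ?t * (R (a (Suc ?t)) s - R (a ?t) s + a ?t s) + R (D (Suc ?t)) s) / \<eta> ?t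
           \<le> R (D ?t) s / \<eta> ?t" using K \<eta>pos[of ?t] by (simp add: divide_right_mono)
        then show ?thesis using \<eta>pos[of ?t] et by (simp add: add_divide_distrib)
      qed
      have "real (Suc j) * a (Suc ?t) s \<le> real j * a ?t s + a ?t s"
        using a_mono[of ?t s] mult_left_mono[OF a_mono[of ?t s], of "real j"] by (simp add: distrib_right)
      then show ?case using IH K2 by simp
    qed
  qed
  have Rle_adv: "\<And>x. - adv P c h \<gamma> \<pi>0 x (\<pi>star x) \<le> G"
  proof -
    fix x
    let ?Q = "Qf P c h \<gamma> \<pi>0 x"
    let ?B = "(\<Sum>a\<in>UNIV. \<bar>?Q a\<bar>) + (\<Sum>a\<in>UNIV. \<bar>h' x (\<pi>0 x) a\<bar>) + Vf P c h \<gamma> \<pi>0 x"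
    have bdd: "bdd_above ((\<lambda>p. - adv P c h \<gamma> \<pi>0 x p) ` prob_simplex)"
    proof (rule bdd_aboveI2)
      fix p :: "real^'a" assume p: "p \<in> prob_simplex"
      have p0: "\<pi>0 x \<in> prob_simplex" using init_pol by (simp add: is_policy_def)
      have pa: "\<And>a. 0 \<le> p $ a \<and> p $ a \<le> 1"
      proof -
        fix a
        have "p $ a \<le> (\<Sum>b\<in>UNIV. p $ b)" using p by (intro member_le_sum) (auto simp: prob_simplex_def)
        then show "0 \<le> p $ a \<and> p $ a \<le> 1" using p by (auto simp: prob_simplex_def)
      qed
      have qa: "\<And>a. 0 \<le> \<pi>0 x $ a \<and> \<pi>0 x $ a \<le> 1"
      proof -
        fix a
        have "\<pi>0 x $ a \<le> (\<Sum>b\<in>UNIV. \<pi>0 x $ b)" using p0 by (intro member_le_sum) (auto simp: prob_simplex_def)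
        then show "0 \<le> \<pi>0 x $ a \<and> \<pi>0 x $ a \<le> 1" using p0 by (auto simp: prob_simplex_def)
      qed
      have hs: "h x p - h x (\<pi>0 x) - (\<Sum>a\<in>UNIV. h' x (\<pi>0 x) a * (p $ a - \<pi>0 x $ a)) \<ge> 0"
        using h_strong[OF p p0, of x] muh bnn[OF p0 p] by (smt (verit) mult_nonneg_nonneg)
      have s1: "- (\<Sum>a\<in>UNIV. ?Q a * p $ a) \<le> (\<Sum>a\<in>UNIV. \<bar>?Q a\<bar>)"
      proof -
        have "\<And>a. - (?Q a * p $ a) \<le> \<bar>?Q a\<bar>"
        proof -
          fix a
          have "\<bar>?Q a * p $ a\<bar> \<le> \<bar>?Q a\<bar> * 1" using pa[of a] by (simp add: abs_mult mult_left_le)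
          then show "- (?Q a * p $ a) \<le> \<bar>?Q a\<bar>" by simp
        qed
        then have "(\<Sum>a\<in>UNIV. - (?Q a * p $ a)) \<le> (\<Sum>a\<in>UNIV. \<bar>?Q a\<bar>)" by (rule sum_mono)
        then show ?thesis by (simp add: sum_negf)
      qed
      have s2: "- (\<Sum>a\<in>UNIV. h' x (\<pi>0 x) a * (p $ a - \<pi>0 x $ a)) \<le> (\<Sum>a\<in>UNIV. \<bar>h' x (\<pi>0 x) a\<bar>)"
      proof -
        have "\<And>a. - (h' x (\<pi>0 x) a * (p $ a - \<pi>0 x $ a)) \<le> \<bar>h' x (\<pi>0 x) a\<bar>"
        proof -
          fix a
          have "\<bar>p $ a - \<pi>0 x $ a\<bar> \<le> 1" using pa[of a] qa[of a] by linarith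
          then have "\<bar>h' x (\<pi>0 x) a * (p $ a - \<pi>0 x $ a)\<bar> \<le> \<bar>h' x (\<pi>0 x) a\<bar> * 1"
            by (simp add: abs_mult mult_left_le)
          then show "- (h' x (\<pi>0 x) a * (p $ a - \<pi>0 x $ a)) \<le> \<bar>h' x (\<pi>0 x) a\<bar>" by simp
        qed
        then have "(\<Sum>a\<in>UNIV. - (h' x (\<pi>0 x) a * (p $ a - \<pi>0 x $ a))) \<le> (\<Sum>a\<in>UNIV. \<bar>h' x (\<pi>0 x) a\<bar>)"
          by (rule sum_mono)
        then show ?thesis by (simp add: sum_negf)
      qed
      show "- adv P c h \<gamma> \<pi>0 x p \<le> ?B" unfolding adv_def using hs s1 s2 by linarith
    qed
    have "- adv P c h \<gamma> \<pi>0 x (\<pi>star x) \<le> adv_gap P c h \<gamma> \<pi>0 x"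
      unfolding adv_gap_def by (rule cSUP_upper[OF smem bdd])
    also have "\<dots> \<le> G" unfolding G_def by (rule Max_ge) auto
    finally show "- adv P c h \<gamma> \<pi>0 x (\<pi>star x) \<le> G" .
  qed
  have a0: "\<And>s. a 0 s \<le> \<Delta>"
  proof -
    fix s
    have "R (\<lambda>x. (-1) * adv P c h \<gamma> (\<pi>s 0) x (\<pi>star x) + (\<lambda>_. 0) x) s
        = (-1) * R (\<lambda>x. adv P c h \<gamma> (\<pi>s 0) x (\<pi>star x)) s + R (\<lambda>_. 0) s"
      by (rule Rlin2)
    then have "a 0 s = R (\<lambda>x. (-1) * adv P c h \<gamma> (\<pi>s 0) x (\<pi>star x) + 0) s"
      using pdstar[of 0 s] Rconst[of 0 s] by simp
    also have "\<dots> \<le> R (\<lambda>_. G) s" using Rle_adv pmd_init by (intro Rmono) simp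
    finally show "a 0 s \<le> \<Delta>" unfolding Rconst \<Delta>_def .
  qed
  have aux: "\<And>z x B :: real. 0 < z \<Longrightarrow> 4 / z * x \<le> B / z \<Longrightarrow> 4 * x \<le> B"
  proof -
    fix z x B :: real assume z: "0 < z" and h1: "4 / z * x \<le> B / z"
    have "z * (4 / z * x) \<le> z * (B / z)" using h1 z by (intro mult_left_mono) auto
    then show "4 * x \<le> B" using z by simp
  qed
  have claim: "\<And>k. (\<forall>s. \<Phi> k s \<le> 2 * (1/2) ^ k * \<Delta> / (1 - \<gamma>)) \<and> (\<forall>s. a (k * N) s \<le> (1/2) ^ k * \<Delta>)"
  proof -
    fix k show "(\<forall>s. \<Phi> k s \<le> 2 * (1/2) ^ k * \<Delta> / (1 - \<gamma>)) \<and> (\<forall>s. a (k * N) s \<le> (1/2) ^ k * \<Delta>)"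
    proof (induction k)
      case 0
      have "\<forall>s. \<Phi> 0 s \<le> 2 * \<Delta> / (1 - \<gamma>)"
      proof
        fix s
        have r1: "R (a 0) s \<le> \<Delta> / (1 - \<gamma>)" using Rmono[of "a 0" "\<lambda>_. \<Delta>", OF a0] Rconst by simp
        have "R (D 0) s \<le> D0 / (1 - \<gamma>)"
          using Rmono[of "D 0" "\<lambda>_. D0"] Rconst D0_bound pmd_init unfolding D_def by simp
        then have "R (D 0) s / (D0 / \<Delta>) \<le> (D0 / (1 - \<gamma>)) / (D0 / \<Delta>)"
          using D0_pos \<Delta>pos by (intro divide_right_mono) auto
        also have "\<dots> = \<Delta> / (1 - \<gamma>)" using D0_pos \<Delta>pos g1' by (simp add: field_simps)
        finally have r2: "R (D 0) s / (D0 / \<Delta>) \<le> \<Delta> / (1 - \<gamma>)" .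
        have "\<eta> 0 = D0 / \<Delta>" unfolding \<eta>_def by simp
        then show "\<Phi> 0 s \<le> 2 * \<Delta> / (1 - \<gamma>)" unfolding \<Phi>_def using r1 r2 by simp
      qed
      then show ?case using a0 by simp
    next
      case (Suc k)
      let ?B = "2 * (1/2) ^ k * \<Delta> / (1 - \<gamma>)"
      have E: "\<And>s. R (a (Suc k * N)) s + real N * a (Suc k * N) s + R (D (Suc k * N)) s / \<eta> (k * N) \<le> ?B"
      proof -
        fix s
        have e1: "R (a (k * N + N)) s + real N * a (k * N + N) s + R (D (k * N + N)) s / \<eta> (k * N) \<le> \<Phi> k s"
          by (rule epoch) simp
        have e2: "k * N + N = Suc k * N" by simp
        have "\<Phi> k s \<le> ?B" using Suc.IH by blast
        then show "R (a (Suc k * N)) s + real N * a (Suc k * N) s + R (D (Suc k * N)) s / \<eta> (k * N) \<le> ?B"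
          using e1 unfolding e2 by linarith
      qed
      have Ra: "\<And>s. 0 \<le> R (a (Suc k * N)) s" using a_nonneg by (intro Rnn) simp
      have RD: "\<And>s. 0 \<le> R (D (Suc k * N)) s / \<eta> (k * N)"
        using D_nonneg \<eta>pos by (intro divide_nonneg_pos Rnn) auto
      have A: "\<forall>s. a (Suc k * N) s \<le> (1/2) ^ Suc k * \<Delta>"
      proof
        fix s
        have "real N * a (Suc k * N) s \<le> ?B" using E[of s] Ra[of s] RD[of s] by linarith
        moreover have "4 / (1 - \<gamma>) * a (Suc k * N) s \<le> real N * a (Suc k * N) s"
          using Nge a_nonneg by (intro mult_right_mono) auto
        ultimately have "4 / (1 - \<gamma>) * a (Suc k * N) s \<le> (2 * (1/2) ^ k * \<Delta>) / (1 - \<gamma>)" by simp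
        then have "4 * a (Suc k * N) s \<le> 2 * (1/2) ^ k * \<Delta>" by (rule aux[OF g1'])
        then show "a (Suc k * N) s \<le> (1/2) ^ Suc k * \<Delta>" by (simp add: mult.commute)
      qed
      have "\<forall>s. \<Phi> (Suc k) s \<le> 2 * (1/2) ^ Suc k * \<Delta> / (1 - \<gamma>)"
      proof
        fix s
        have r1: "R (a (Suc k * N)) s \<le> (1/2) ^ Suc k * \<Delta> / (1 - \<gamma>)"
          using Rmono[of "a (Suc k * N)" "\<lambda>_. (1/2) ^ Suc k * \<Delta>"] A Rconst by simp
        have e4: "\<eta> (Suc k * N) = 4 * \<eta> (k * N)" unfolding \<eta>k0 by simp
        have "R (D (Suc k * N)) s / \<eta> (k * N) \<le> ?B" using E[of s] Ra[of s] a_nonneg[of "Suc k * N" s] Npos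
          by (smt (verit) mult_nonneg_nonneg of_nat_0_le_iff)
        then have r2': "(R (D (Suc k * N)) s / \<eta> (k * N)) / 4 \<le> ?B / 4" by (rule divide_right_mono) simp
        have eq4: "R (D (Suc k * N)) s / \<eta> (Suc k * N) = (R (D (Suc k * N)) s / \<eta> (k * N)) / 4"
          by (subst e4) (simp add: mult.commute)
        have r2: "R (D (Suc k * N)) s / \<eta> (Suc k * N) \<le> ?B / 4" unfolding eq4 by (rule r2')
        show "\<Phi> (Suc k) s \<le> 2 * (1/2) ^ Suc k * \<Delta> / (1 - \<gamma>)"
        proof -
          have gen: "\<And>Y z :: real. 0 < z \<Longrightarrow> (Y / 2) / z + (2 * Y / z) / 4 = Y / z"
            by (simp add: field_simps)
          have p1: "(1/2::real) ^ Suc k * \<Delta> = ((1/2) ^ k * \<Delta>) / 2" by simp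
          have p2: "2 * (1/2::real) ^ k * \<Delta> = 2 * ((1/2) ^ k * \<Delta>)" by simp
          have p3: "2 * (1/2::real) ^ Suc k * \<Delta> = (1/2) ^ k * \<Delta>" by simp
          have sumeq: "(1/2) ^ Suc k * \<Delta> / (1 - \<gamma>) + ?B / 4 = 2 * (1/2) ^ Suc k * \<Delta> / (1 - \<gamma>)"
            unfolding p3 unfolding p1 p2 by (rule gen[OF g1'])
          show ?thesis unfolding \<Phi>_def using r1 r2 sumeq by linarith
        qed
      qed
      then show ?case using A by simp
    qed
  qed
  show ?thesis
  proof (intro allI)
    fix t s
    let ?k = "t div N"
    have "?k * N \<le> t" by simp
    have "a t s \<le> a (?k * N) s" using lift_Suc_antimono_le[of "\<lambda>t. a t s", OF a_mono] \<open>?k * N \<le> t\<close> by blast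
    also have "\<dots> \<le> (1/2) ^ ?k * \<Delta>" using claim by blast
    finally show "Vf P c h \<gamma> (\<pi>s t) s - Vf P c h \<gamma> \<pi>star s
           \<le> (1 / 2) ^ (t div nat \<lceil>4 / (1 - \<gamma>)\<rceil>) * (Max (range (adv_gap P c h \<gamma> \<pi>0)) / (1 - \<gamma>))"
      unfolding a_def V_def Vs_def \<Delta>_def G_def N_def by simp
  qed
qed

end
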